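(* Let $G$ be a connected graph in $\mathcal{C}$ and $C$ an induced $C_5$ in $G$. Then $R$ is a clique, and every vertex of $R$ is adjacent to every vertex of $X$.
   Context: $\mathcal{C}=\mathrm{Free}(\text{claw}, 4K_1, \text{5-wheel}, C_5\text{-twin}, P_5\text{-twin}, K_5-e)$, where $\mathrm{Free}(L)$ is the class of graphs with no induced subgraph isomorphic to a member of $L$; the claw is $K_{1,3}$; $4K_1$ is the edgeless graph on 4 vertices; the 5-wheel is $C_5$ plus a vertex adjacent to all five cycle vertices; the $C_5$-twin is $C_5$ plus a new vertex adjacent to one cycle vertex $v$ and both cycle-neighbours of $v$; the $P_5$-twin is a path $p_1p_2p_3p_4p_5$ plus a new vertex adjacent to exactly $p_2,p_3,p_4$; $K_5-e$ is $K_5$ minus one edge. Given an induced cycle $C$ of length 5 with vertices $0,\dots,4$ in cyclic order (indices taken mod 5): $R$ is the set of vertices outside $C$ with no neighbour in $C$; $X_j$ is the set of vertices outside $C$ whose neighbourhood in $C$ is exactly $\{j,j+1\}$; $Y_j$ is the set of vertices outside $C$ whose neighbourhood in $C$ is exactly $\{j,j+1,j+2,j+3\}$; $X=\bigcup_j X_j$, $Y=\bigcup_j Y_j$. *)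

theory Defs
  imports Main
begin

definition graph :: "'a set \<Rightarrow> ('a \<Rightarrow> 'a \<Rightarrow> bool) \<Rightarrow> bool" where
  "graph V E \<longleftrightarrow> finite V \<and> (\<forall>x y. E x y \<longrightarrow> x \<in> V \<and> y \<in> V)
     \<and> (\<forall>x y. E x y \<longrightarrow> E y x) \<and> (\<forall>x. \<not> E x x)"

definition connected_graph :: "'a set \<Rightarrow> ('a \<Rightarrow> 'a \<Rightarrow> bool) \<Rightarrow> bool" where
  "connected_graph V E \<longleftrightarrow> (\<forall>x\<in>V. \<forall>y\<in>V. E\<^sup>*\<^sup>* x y)"

definition edges_of :: "(nat \<times> nat) set \<Rightarrow> nat \<Rightarrow> nat \<Rightarrow> bool" where
  "edges_of S i j \<longleftrightarrow> (i, j) \<in> S \<or> (j, i) \<in> S"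

definition has_induced :: "'a set \<Rightarrow> ('a \<Rightarrow> 'a \<Rightarrow> bool) \<Rightarrow> nat \<Rightarrow> (nat \<Rightarrow> nat \<Rightarrow> bool) \<Rightarrow> bool" where
  "has_induced V E n h \<longleftrightarrow> (\<exists>f. inj_on f {0..<n} \<and> f ` {0..<n} \<subseteq> V \<and>
      (\<forall>i<n. \<forall>j<n. E (f i) (f j) \<longleftrightarrow> h i j))"

definition claw :: "nat \<Rightarrow> nat \<Rightarrow> bool" where
  "claw = edges_of {(0,1),(0,2),(0,3)}"
definition fourK1 :: "nat \<Rightarrow> nat \<Rightarrow> bool" where
  "fourK1 = edges_of {}"
definition wheel5 :: "nat \<Rightarrow> nat \<Rightarrow> bool" where
  "wheel5 = edges_of {(0,1),(1,2),(2,3),(3,4),(4,0),(5,0),(5,1),(5,2),(5,3),(5,4)}"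
definition C5_twin :: "nat \<Rightarrow> nat \<Rightarrow> bool" where
  "C5_twin = edges_of {(0,1),(1,2),(2,3),(3,4),(4,0),(5,4),(5,0),(5,1)}"
definition P5_twin :: "nat \<Rightarrow> nat \<Rightarrow> bool" where
  "P5_twin = edges_of {(0,1),(1,2),(2,3),(3,4),(5,1),(5,2),(5,3)}"
definition K5_minus_e :: "nat \<Rightarrow> nat \<Rightarrow> bool" where
  "K5_minus_e = edges_of {(0,2),(0,3),(0,4),(1,2),(1,3),(1,4),(2,3),(2,4),(3,4)}"

definition in_class_C :: "'a set \<Rightarrow> ('a \<Rightarrow> 'a \<Rightarrow> bool) \<Rightarrow> bool" where
  "in_class_C V E \<longleftrightarrow> graph V E \<and>
     \<not> has_induced V E 4 claw \<and> \<not> has_induced V E 4 fourK1 \<and>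
     \<not> has_induced V E 6 wheel5 \<and> \<not> has_induced V E 6 C5_twin \<and>
     \<not> has_induced V E 6 P5_twin \<and> \<not> has_induced V E 5 K5_minus_e"

definition induced_C5 :: "'a set \<Rightarrow> ('a \<Rightarrow> 'a \<Rightarrow> bool) \<Rightarrow> (nat \<Rightarrow> 'a) \<Rightarrow> bool" where
  "induced_C5 V E c \<longleftrightarrow> inj_on c {0..<5} \<and> c ` {0..<5} \<subseteq> V \<and>
     (\<forall>i<5. \<forall>j<5. E (c i) (c j) \<longleftrightarrow> (j = (i + 1) mod 5 \<or> i = (j + 1) mod 5))"

definition nbrs_on_C :: "('a \<Rightarrow> 'a \<Rightarrow> bool) \<Rightarrow> (nat \<Rightarrow> 'a) \<Rightarrow> 'a \<Rightarrow> nat set" where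
  "nbrs_on_C E c v = {i. i < 5 \<and> E v (c i)}"

definition R_set :: "'a set \<Rightarrow> ('a \<Rightarrow> 'a \<Rightarrow> bool) \<Rightarrow> (nat \<Rightarrow> 'a) \<Rightarrow> 'a set" where
  "R_set V E c = {v \<in> V - c ` {0..<5}. nbrs_on_C E c v = {}}"

definition X_j :: "'a set \<Rightarrow> ('a \<Rightarrow> 'a \<Rightarrow> bool) \<Rightarrow> (nat \<Rightarrow> 'a) \<Rightarrow> nat \<Rightarrow> 'a set" where
  "X_j V E c j = {v \<in> V - c ` {0..<5}. nbrs_on_C E c v = {j mod 5, (j + 1) mod 5}}"

definition X_set :: "'a set \<Rightarrow> ('a \<Rightarrow> 'a \<Rightarrow> bool) \<Rightarrow> (nat \<Rightarrow> 'a) \<Rightarrow> 'a set" where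
  "X_set V E c = (\<Union>j<5. X_j V E c j)"

end

theory Submission
  imports Defs
begin

lemma fourK1I:
  assumes g: "graph V E" and V: "a\<in>V" "b\<in>V" "c\<in>V" "d\<in>V"
    and dist: "a\<noteq>b" "a\<noteq>c" "a\<noteq>d" "b\<noteq>c" "b\<noteq>d" "c\<noteq>d"
    and ne: "\<not>E a b" "\<not>E a c" "\<not>E a d" "\<not>E b c" "\<not>E b d" "\<not>E c d"
  shows "has_induced V E 4 fourK1"
proof -
  define f where "f = (\<lambda>i::nat. if i=0 then a else if i=1 then b else if i=2 then c else d)"
  have s: "{0..<4::nat} = {0,1,2,3}" by auto
  have q: "\<And>P. (\<forall>i<(4::nat). P i) = (P 0 \<and> P 1 \<and> P 2 \<and> P 3)"
    by (auto simp: less_Suc_eq numeral_eq_Suc)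
  have sym: "\<And>x y. E x y \<Longrightarrow> E y x" and irr: "\<And>x. \<not> E x x"
    using g unfolding graph_def by blast+
  have ne2: "\<not>E b a" "\<not>E c a" "\<not>E d a" "\<not>E c b" "\<not>E d b" "\<not>E d c"
    using ne sym by blast+
  show ?thesis unfolding has_induced_def fourK1_def edges_of_def
    apply (rule exI[of _ f])
    unfolding s q using V dist ne ne2 irr
    by (auto simp: f_def)
qed

lemma nb:
  assumes "nbrs_on_C E c x = S" "k < 5"
  shows "E x (c k) \<longleftrightarrow> k \<in> S"
  using assms unfolding nbrs_on_C_def by auto

theorem mainTheorem12:
  fixes V :: "'a set" and E :: "'a \<Rightarrow> 'a \<Rightarrow> bool" and c :: "nat \<Rightarrow> 'a"
  assumes "in_class_C V E" and "connected_graph V E" and "induced_C5 V E c"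
  shows "(\<forall>u\<in>R_set V E c. \<forall>w\<in>R_set V E c. u \<noteq> w \<longrightarrow> E u w)
       \<and> (\<forall>u\<in>R_set V E c. \<forall>x\<in>X_set V E c. E u x)"
proof -
  have g: "graph V E" and no4: "\<not> has_induced V E 4 fourK1"
    using assms(1) unfolding in_class_C_def by auto
  have sym: "\<And>x y. E x y \<Longrightarrow> E y x"
    using g unfolding graph_def by blast
  have inj: "inj_on c {0..<5}" and cV: "c ` {0..<5} \<subseteq> V"
    and cE: "\<forall>i<5. \<forall>j<5. E (c i) (c j) \<longleftrightarrow> (j = (i + 1) mod 5 \<or> i = (j + 1) mod 5)"
    using assms(3) unfolding induced_C5_def by auto
  have cv: "\<And>i. i < 5 \<Longrightarrow> c i \<in> V" using cV by auto
  have cd: "\<And>i j. i < 5 \<Longrightarrow> j < 5 \<Longrightarrow> i \<noteq> j \<Longrightarrow> c i \<noteq> c j"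
    using inj unfolding inj_on_def by auto
  have c02: "\<not> E (c 0) (c 2)" "\<not> E (c 1) (c 3)" "\<not> E (c 2) (c 4)"
     "\<not> E (c 3) (c 0)" "\<not> E (c 4) (c 1)"
    using cE by auto
  have d: "c 0 \<noteq> c 2" "c 1 \<noteq> c 3" "c 2 \<noteq> c 4" "c 3 \<noteq> c 0" "c 4 \<noteq> c 1"
    using cd by auto
  have Rprop: "u \<in> V \<and> (\<forall>k<5. u \<noteq> c k \<and> \<not> E u (c k) \<and> \<not> E (c k) u)" if "u \<in> R_set V E c" for u
    using that sym unfolding R_set_def nbrs_on_C_def by auto
  have part1: "\<forall>u\<in>R_set V E c. \<forall>w\<in>R_set V E c. u \<noteq> w \<longrightarrow> E u w"
  proof (intro ballI impI)
    fix u w assume u: "u \<in> R_set V E c" and w: "w \<in> R_set V E c" and uw: "u \<noteq> w"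
    show "E u w"
    proof (rule ccontr)
      assume "\<not> E u w"
      have "has_induced V E 4 fourK1"
        apply (rule fourK1I[OF g, of u w "c 0" "c 2"])
        using Rprop[OF u] Rprop[OF w] uw \<open>\<not> E u w\<close> cv c02 d by auto
      with no4 show False by simp
    qed
  qed
  have part2: "\<forall>u\<in>R_set V E c. \<forall>x\<in>X_set V E c. E u x"
  proof (intro ballI)
    fix u x assume u: "u \<in> R_set V E c" and x: "x \<in> X_set V E c"
    obtain j where j: "j < 5" and xj: "x \<in> X_j V E c j" using x unfolding X_set_def by auto
    have xV: "x \<in> V" and xn: "\<forall>k<5. x \<noteq> c k"
      and xs: "nbrs_on_C E c x = {j mod 5, (j + 1) mod 5}"
      using xj unfolding X_j_def by auto
    note xk = nb[OF xs]
    have ux: "u \<noteq> x"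
    proof
      assume "u = x"
      have "E x (c (j mod 5))" using xk[of "j mod 5"] by auto
      with Rprop[OF u] \<open>u = x\<close> show False by auto
    qed
    show "E u x"
    proof (rule ccontr)
      assume nux: "\<not> E u x"
      have nxu: "\<not> E x u" using nux sym by blast
      have "has_induced V E 4 fourK1"
      proof -
        have "j = 0 \<or> j = 1 \<or> j = 2 \<or> j = 3 \<or> j = 4" using j by auto
        then show ?thesis
        proof (elim disjE)
          assume "j = 0"
          show ?thesis
            apply (rule fourK1I[OF g, of u x "c 2" "c 4"])
            using Rprop[OF u] xV xn ux nux xk[of 2] xk[of 4] \<open>j = 0\<close> cv c02 d by auto
        next
          assume "j = 1"
          show ?thesis
            apply (rule fourK1I[OF g, of u x "c 3" "c 0"])
            using Rprop[OF u] xV xn ux nux xk[of 3] xk[of 0] \<open>j = 1\<close> cv c02 d by auto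
        next
          assume "j = 2"
          show ?thesis
            apply (rule fourK1I[OF g, of u x "c 4" "c 1"])
            using Rprop[OF u] xV xn ux nux xk[of 4] xk[of 1] \<open>j = 2\<close> cv c02 d by auto
        next
          assume "j = 3"
          show ?thesis
            apply (rule fourK1I[OF g, of u x "c 0" "c 2"])
            using Rprop[OF u] xV xn ux nux xk[of 0] xk[of 2] \<open>j = 3\<close> cv c02 d by auto
        next
          assume "j = 4"
          show ?thesis
            apply (rule fourK1I[OF g, of u x "c 1" "c 3"])
            using Rprop[OF u] xV xn ux nux xk[of 1] xk[of 3] \<open>j = 4\<close> cv c02 d by auto
        qed
      qed
      with no4 show False by simp
    qed
  qed
  show ?thesis using part1 part2 by blast
qed

end
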